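(* Let $\mathcal{A}$ be a finite-state invertible synchronous automaton over $\Sigma$ such that the semigroup $S(\mathcal{A})$ contains the identity map of $\Sigma^*$. Then the group of units of $S(\mathcal{A})$ is isomorphic to a self-similar group.
   Context: A synchronous automaton is $(Q,\Sigma,t,o)$ with $Q$ a set of states, $\Sigma$ a finite alphabet, $t:Q\times\Sigma\to Q$ and $o:Q\times\Sigma\to\Sigma$; it is invertible if for each $q$ the map $\sigma\mapsto o(q,\sigma)$ is a permutation of $\Sigma$. Each state $q$ induces $q:\Sigma^*\to\Sigma^*$ by $q(\emptyset)=\emptyset$, $q(\sigma w)=o(q,\sigma)\,q'(w)$ with $q'=t(q,\sigma)$. $S(\mathcal{A})$ is the semigroup generated by the states under composition. A self-similar group is the group generated by the states of an invertible synchronous automaton with possibly infinitely many states. *)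

theory Defs
  imports "HOL-Algebra.Algebra"
begin

fun act :: "('q \<Rightarrow> 'a \<Rightarrow> 'q) \<Rightarrow> ('q \<Rightarrow> 'a \<Rightarrow> 'a) \<Rightarrow> 'q \<Rightarrow> 'a list \<Rightarrow> 'a list" where
  "act t out q [] = []"
| "act t out q (s # w) = out q s # act t out (t q s) w"

text \<open>S(A): the semigroup generated by the state maps under composition
  (all states of the state type are states of the automaton).\<close>
inductive_set aut_semigroup :: "('q \<Rightarrow> 'a \<Rightarrow> 'q) \<Rightarrow> ('q \<Rightarrow> 'a \<Rightarrow> 'a) \<Rightarrow> ('a list \<Rightarrow> 'a list) set"
  for t out where
  gen: "act t out q \<in> aut_semigroup t out"
| comp: "f \<in> aut_semigroup t out \<Longrightarrow> g \<in> aut_semigroup t out \<Longrightarrow> f \<circ> g \<in> aut_semigroup t out"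

text \<open>S(A) viewed as a monoid (meaningful when id belongs to S(A)).\<close>
definition aut_monoid :: "('q \<Rightarrow> 'a \<Rightarrow> 'q) \<Rightarrow> ('q \<Rightarrow> 'a \<Rightarrow> 'a) \<Rightarrow> ('a list \<Rightarrow> 'a list) monoid" where
  "aut_monoid t out = \<lparr>carrier = aut_semigroup t out, monoid.mult = (\<lambda>f g. f \<circ> g), one = id\<rparr>"

text \<open>An invertible synchronous automaton with (possibly infinite) state set Q
  over a finite nonempty alphabet Sig; states and letters are coded as naturals.\<close>
definition invertible_aut :: "nat set \<Rightarrow> nat set \<Rightarrow> (nat \<Rightarrow> nat \<Rightarrow> nat) \<Rightarrow> (nat \<Rightarrow> nat \<Rightarrow> nat) \<Rightarrow> bool" where
  "invertible_aut Sig Q t out \<longleftrightarrow> finite Sig \<and> Sig \<noteq> {} \<and>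
     (\<forall>q\<in>Q. \<forall>s\<in>Sig. t q s \<in> Q) \<and> (\<forall>q\<in>Q. bij_betw (out q) Sig Sig)"

definition ssg_group :: "nat set \<Rightarrow> nat set \<Rightarrow> (nat \<Rightarrow> nat \<Rightarrow> nat) \<Rightarrow> (nat \<Rightarrow> nat \<Rightarrow> nat) \<Rightarrow> (nat list \<Rightarrow> nat list) monoid" where
  "ssg_group Sig Q t out =
     (BijGroup (lists Sig))\<lparr>carrier := generate (BijGroup (lists Sig))
        ((\<lambda>q. restrict (act t out q) (lists Sig)) ` Q)\<rparr>"

end

theory Submission
  imports Defs "HOL-Library.Countable"
begin

fun compl :: "('q \<Rightarrow> 'a \<Rightarrow> 'q) \<Rightarrow> ('q \<Rightarrow> 'a \<Rightarrow> 'a) \<Rightarrow> 'q list \<Rightarrow> 'a list \<Rightarrow> 'a list" where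
  "compl t out [] = id"
| "compl t out (q # ws) = act t out q \<circ> compl t out ws"

fun outs :: "('q \<Rightarrow> 'a \<Rightarrow> 'a) \<Rightarrow> 'q list \<Rightarrow> 'a \<Rightarrow> 'a" where
  "outs out [] s = s"
| "outs out (q # ws) s = out q (outs out ws s)"

fun secl :: "('q \<Rightarrow> 'a \<Rightarrow> 'q) \<Rightarrow> ('q \<Rightarrow> 'a \<Rightarrow> 'a) \<Rightarrow> 'q list \<Rightarrow> 'a \<Rightarrow> 'q list" where
  "secl t out [] s = []"
| "secl t out (q # ws) s = t q (outs out ws s) # secl t out ws s"

lemma compl_Nil: "compl t out ws [] = []"
  by (induction ws) auto

lemma compl_Cons: "compl t out ws (s # w) = outs out ws s # compl t out (secl t out ws s) w"
  by (induction ws) auto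

lemma compl_append: "compl t out (xs @ ys) = compl t out xs \<circ> compl t out ys"
  by (induction xs) auto

lemma semigroup_compl:
  "f \<in> aut_semigroup t out \<Longrightarrow> \<exists>ws. ws \<noteq> [] \<and> f = compl t out ws"
proof (induction rule: aut_semigroup.induct)
  case (gen q) then show ?case by (intro exI[of _ "[q]"]) auto
next
  case (comp f g)
  then obtain xs ys where "xs \<noteq> []" "f = compl t out xs" "ys \<noteq> []" "g = compl t out ys" by blast
  then show ?case by (intro exI[of _ "xs @ ys"]) (auto simp: compl_append)
qed

lemma compl_semigroup:
  assumes "id \<in> aut_semigroup t out"
  shows "compl t out ws \<in> aut_semigroup t out"
proof (induction ws)
  case Nil then show ?case using assms by (simp only: compl.simps)
next
  case (Cons q ws) then show ?case by (metis compl.simps(2) aut_semigroup.intros)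
qed

lemma bij_outs: "\<forall>q. bij (out q) \<Longrightarrow> bij (outs out ws)"
proof (induction ws)
  case Nil
  have "outs out [] = id" by auto
  then show ?case by (metis bij_id)
next
  case (Cons q ws)
  have "outs out (q # ws) = out q \<circ> outs out ws" by auto
  then show ?case using Cons by (metis bij_comp)
qed

lemma sec_inverse:
  assumes vu: "compl t out vs \<circ> compl t out ws = id" and uv: "compl t out ws \<circ> compl t out vs = id"
  shows "compl t out (secl t out vs (outs out ws a)) \<circ> compl t out (secl t out ws a) = id
    \<and> compl t out (secl t out ws a) \<circ> compl t out (secl t out vs (outs out ws a)) = id"
proof -
  let ?b = "outs out ws a"
  have 1: "outs out vs ?b = a \<and> compl t out (secl t out vs ?b) (compl t out (secl t out ws a) w) = w" for w
  proof -
    have "compl t out vs (compl t out ws (a # w)) = a # w" using vu by (metis comp_apply id_apply)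
    then show ?thesis by (simp add: compl_Cons)
  qed
  have 2: "compl t out (secl t out ws a) (compl t out (secl t out vs ?b) w) = w" for w
  proof -
    have "compl t out ws (compl t out vs (?b # w)) = ?b # w" using uv by (metis comp_apply id_apply)
    then show ?thesis using 1 by (simp add: compl_Cons)
  qed
  show ?thesis using 1 2 by (auto simp: fun_eq_iff)
qed


definition phi :: "('a::countable list \<Rightarrow> 'a list) \<Rightarrow> nat list \<Rightarrow> nat list" where
  "phi f = restrict (\<lambda>w. map to_nat (f (map from_nat w))) (lists (range (to_nat::'a\<Rightarrow>nat)))"

lemma from_to_comp[simp]: "from_nat \<circ> (to_nat::'a::countable \<Rightarrow> nat) = id"
  by (auto simp: fun_eq_iff)

lemma dec_enc: "map from_nat (map (to_nat::'a::countable \<Rightarrow> nat) x) = x"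
  by simp

lemma enc_in[simp]: "map (to_nat::'a::countable \<Rightarrow> nat) x \<in> lists (range (to_nat::'a \<Rightarrow> nat))"
  by auto

lemma enc_dec: "w \<in> lists (range (to_nat::'a::countable \<Rightarrow> nat)) \<Longrightarrow> map (to_nat \<circ> (from_nat::nat\<Rightarrow>'a)) w = w"
  by (auto intro!: map_idI)

lemma phi_in: "w \<in> lists (range (to_nat::'a::countable \<Rightarrow> nat)) \<Longrightarrow> phi (f::'a list \<Rightarrow> 'a list) w \<in> lists (range (to_nat::'a \<Rightarrow> nat))"
  by (auto simp: phi_def)

lemma phi_comp: "w \<in> lists (range (to_nat::'a::countable \<Rightarrow> nat)) \<Longrightarrow>
   phi ((f::'a list \<Rightarrow> 'a list) \<circ> g) w = phi f (phi g w)"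
  using phi_in[of w g] by (simp add: phi_def dec_enc)

lemma phi_id: "phi (id::'a::countable list \<Rightarrow> _) = (\<lambda>x\<in>lists (range (to_nat::'a \<Rightarrow> nat)). x)"
  by (auto simp: phi_def enc_dec fun_eq_iff)

lemma phi_Bij:
  assumes "(f::'a::countable list \<Rightarrow> 'a list) \<circ> g = id" "g \<circ> f = id"
  shows "phi f \<in> Bij (lists (range (to_nat::'a \<Rightarrow> nat)))"
proof -
  let ?S = "lists (range (to_nat::'a \<Rightarrow> nat))"
  have "bij_betw (phi f) ?S ?S"
  proof (rule bij_betw_byWitness[where f'="phi g"])
    show "\<forall>a\<in>?S. phi g (phi f a) = a" using assms(2) phi_comp[of _ g f] phi_id by (metis restrict_apply')
    show "\<forall>a\<in>?S. phi f (phi g a) = a" using assms(1) phi_comp[of _ f g] phi_id by (metis restrict_apply')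
    show "phi f ` ?S \<subseteq> ?S" using phi_in by blast
    show "phi g ` ?S \<subseteq> ?S" using phi_in by blast
  qed
  moreover have "phi f \<in> extensional ?S" by (simp add: phi_def)
  ultimately show ?thesis by (simp add: Bij_def)
qed

lemma phi_inj: "phi (f::'a::countable list \<Rightarrow> 'a list) = phi g \<Longrightarrow> f = g"
proof (rule ext)
  fix x :: "'a list" assume "phi f = phi g"
  hence "phi f (map to_nat x) = phi g (map to_nat x)" by simp
  hence "map to_nat (f x) = map (to_nat::'a\<Rightarrow>nat) (g x)" by (simp add: phi_def dec_enc)
  thus "f x = g x" by (metis dec_enc)
qed

lemma phi_mult:
  assumes "phi f \<in> Bij (lists (range (to_nat::'a::countable \<Rightarrow> nat)))"
    "phi g \<in> Bij (lists (range (to_nat::'a \<Rightarrow> nat)))"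
  shows "phi ((f::'a list \<Rightarrow> 'a list) \<circ> g) = phi f \<otimes>\<^bsub>BijGroup (lists (range (to_nat::'a \<Rightarrow> nat)))\<^esub> phi g"
proof -
  have "phi (f \<circ> g) w = compose (lists (range (to_nat::'a \<Rightarrow> nat))) (phi f) (phi g) w" for w
    by (cases "w \<in> lists (range (to_nat::'a \<Rightarrow> nat))")
       (simp_all add: compose_def phi_comp, simp add: phi_def)
  then show ?thesis using assms by (simp add: BijGroup_def fun_eq_iff)
qed


lemma act_code:
  fixes t :: "'q::countable \<Rightarrow> 'a::countable \<Rightarrow> 'q" and out :: "'q \<Rightarrow> 'a \<Rightarrow> 'a"
  shows "w \<in> lists (range (to_nat::'a\<Rightarrow>nat)) \<Longrightarrow>
    act (\<lambda>n s. to_nat (secl t out (from_nat n) (from_nat s :: 'a)))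
        (\<lambda>n s. to_nat (outs out (from_nat n :: 'q list) (from_nat s :: 'a))) n w
    = map to_nat (compl t out (from_nat n) (map from_nat w))"
proof (induction w arbitrary: n)
  case Nil then show ?case by (simp add: compl_Nil)
next
  case (Cons s w)
  then obtain a :: 'a where a: "s = to_nat a" by auto
  show ?case using Cons by (simp add: a compl_Cons)
qed

theorem mainTheorem13:
  fixes t :: "'q::finite \<Rightarrow> 'a::finite \<Rightarrow> 'q" and out :: "'q \<Rightarrow> 'a \<Rightarrow> 'a"
  assumes "\<forall>q. bij (out q)"
    and "id \<in> aut_semigroup t out"
  shows "\<exists>Sig Q t' out'. invertible_aut Sig Q t' out' \<and>
           units_of (aut_monoid t out) \<cong> ssg_group Sig Q t' out'"
proof -
  define M where "M = aut_monoid t out"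
  define Sig where "Sig = range (to_nat::'a\<Rightarrow>nat)"
  define S where "S = lists Sig"
  define t' where "t' = (\<lambda>n s. to_nat (secl t out (from_nat n :: 'q list) (from_nat s :: 'a)))"
  define out' where "out' = (\<lambda>n s. to_nat (outs out (from_nat n :: 'q list) (from_nat s :: 'a)))"
  define Q where "Q = {n. compl t out (from_nat n :: 'q list) \<in> Units M}"
  have units: "u \<in> Units M \<longleftrightarrow> u \<in> aut_semigroup t out \<and> (\<exists>v\<in>aut_semigroup t out. v \<circ> u = id \<and> u \<circ> v = id)" for u
    by (auto simp: Units_def M_def aut_monoid_def)
  have mon: "monoid M"
    by (rule monoidI) (auto simp: M_def aut_monoid_def assms aut_semigroup.comp)
  have grpU: "group (units_of M)" using monoid.units_group[OF mon] .
  have phiU: "phi u \<in> Bij S" if "u \<in> Units M" for u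
    using that units phi_Bij unfolding S_def Sig_def by blast
  have hom: "phi \<in> hom (units_of M) (BijGroup S)"
  proof (rule homI)
    show "phi x \<in> carrier (BijGroup S)" if "x \<in> carrier (units_of M)" for x
      using that phiU by (simp add: units_of_carrier BijGroup_def)
    show "phi (x \<otimes>\<^bsub>units_of M\<^esub> y) = phi x \<otimes>\<^bsub>BijGroup S\<^esub> phi y"
      if "x \<in> carrier (units_of M)" "y \<in> carrier (units_of M)" for x y
      using that phi_mult[OF phiU[unfolded S_def Sig_def] phiU[unfolded S_def Sig_def], of x y] unfolding S_def Sig_def
      by (simp add: units_of_carrier units_of_mult M_def aut_monoid_def)
  qed
  have gh: "group_hom (units_of M) (BijGroup S) phi"
    using grpU group_BijGroup hom by (simp add: group_hom_def group_hom_axioms_def)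
  have sub: "subgroup (phi ` Units M) (BijGroup S)"
    using group_hom.img_is_subgroup[OF gh] by (simp add: units_of_carrier)
  have gen: "generate (BijGroup S) (phi ` Units M) = phi ` Units M"
    using group.generate_subgroup_incl[OF group_BijGroup _ sub] generate.incl[of _ "phi ` Units M"]
    by blast
  have gens: "(\<lambda>q. restrict (act t' out' q) S) ` Q = phi ` Units M"
  proof
    have eq: "restrict (act t' out' n) S = phi (compl t out (from_nat n))" for n
      using act_code[of _ t out n] unfolding t'_def out'_def S_def Sig_def phi_def
      by (auto simp: fun_eq_iff)
    show "(\<lambda>q. restrict (act t' out' q) S) ` Q \<subseteq> phi ` Units M"
      using eq by (auto simp: Q_def)
    show "phi ` Units M \<subseteq> (\<lambda>q. restrict (act t' out' q) S) ` Q"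
    proof
      fix f assume "f \<in> phi ` Units M"
      then obtain u where u: "u \<in> Units M" "f = phi u" by blast
      then obtain ws where ws: "u = compl t out ws" using units semigroup_compl by blast
      have "to_nat ws \<in> Q" using u ws by (simp add: Q_def)
      moreover have "f = restrict (act t' out' (to_nat ws)) S" using eq u ws by simp
      ultimately show "f \<in> (\<lambda>q. restrict (act t' out' q) S) ` Q" by blast
    qed
  qed
  have inv: "invertible_aut Sig Q t' out'"
    unfolding invertible_aut_def
  proof (intro conjI ballI)
    show "finite Sig" by (simp add: Sig_def)
    show "Sig \<noteq> {}" by (simp add: Sig_def)
  next
    fix n s assume n: "n \<in> Q" and s: "s \<in> Sig"
    then obtain u where u: "u \<in> aut_semigroup t out" "compl t out (from_nat n :: 'q list) = u"
      and "\<exists>v\<in>aut_semigroup t out. v \<circ> u = id \<and> u \<circ> v = id" using units Q_def by blast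
    then obtain v where v: "v \<in> aut_semigroup t out" "v \<circ> u = id" "u \<circ> v = id" by blast
    then obtain vs where vs: "v = compl t out vs" using semigroup_compl by blast
    note si = sec_inverse[of t out vs "from_nat n" "from_nat s"]
    show "t' n s \<in> Q"
      using si v vs u compl_semigroup[OF assms(2)]
      by (simp add: Q_def t'_def units) blast
  next
    fix n assume "n \<in> Q"
    let ?h = "outs out (from_nat n :: 'q list)"
    have b: "bij ?h" using bij_outs assms(1) by blast
    show "bij_betw (out' n) Sig Sig"
    proof (rule bij_betw_byWitness[where f'="\<lambda>s. to_nat (inv_into UNIV ?h (from_nat s :: 'a))"])
      show "\<forall>a\<in>Sig. to_nat (inv_into UNIV ?h (from_nat (out' n a))) = a"
        using b by (auto simp: Sig_def out'_def bij_def)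
      show "\<forall>a\<in>Sig. out' n (to_nat (inv_into UNIV ?h (from_nat a))) = a"
        using b by (auto simp: Sig_def out'_def bij_def surj_f_inv_f)
      show "out' n ` Sig \<subseteq> Sig" by (auto simp: Sig_def out'_def)
      show "(\<lambda>s. to_nat (inv_into UNIV ?h (from_nat s :: 'a))) ` Sig \<subseteq> Sig" by (auto simp: Sig_def)
    qed
  qed
  have carr: "carrier (ssg_group Sig Q t' out') = phi ` Units M"
    using gen gens by (simp add: ssg_group_def S_def)
  have "phi \<in> iso (units_of M) (ssg_group Sig Q t' out')"
    unfolding iso_def
  proof (intro CollectI conjI)
    show "phi \<in> hom (units_of M) (ssg_group Sig Q t' out')"
      using hom carr unfolding hom_def by (auto simp: ssg_group_def S_def units_of_carrier)
    show "bij_betw phi (carrier (units_of M)) (carrier (ssg_group Sig Q t' out'))"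
      using carr phi_inj by (auto simp: units_of_carrier bij_betw_def inj_on_def)
  qed
  then show ?thesis using inv is_isoI unfolding M_def by blast
qed

end
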